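(* Let $m$ and $n$ be positive integers such that $1<m\le n$. Then \[ \sum_{d=1}^n \mu(d)\, 2^{\lfloor\frac{n}{d} \rfloor - \lfloor \frac{n-1}{d} \rfloor + \lfloor\frac{m}{d} \rfloor - \lfloor \frac{m-1}{d} \rfloor} = \begin{cases} M(n) & \text{if } \gcd(m,n) >1, \\ 1 + M(n) & \text{if } \gcd(m,n)=1. \end{cases} \]
   Context: $\mu$ is the Möbius function and $M(n)=\sum_{d=1}^n\mu(d)$ is the Mertens function. $\lfloor x\rfloor$ is the floor of $x$. *)

theory Defs
  imports Main "HOL-Computational_Algebra.Squarefree" "HOL-Computational_Algebra.Primes"
begin

definition moebius_mu :: "nat \<Rightarrow> int" where
  "moebius_mu n = (if n = 0 \<or> \<not> squarefree n then 0 else (-1) ^ card (prime_factors n))"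

definition mertens :: "nat \<Rightarrow> int" where
  "mertens n = (\<Sum>d=1..n. moebius_mu d)"

end

theory Submission
  imports Defs
begin

lemma mu_mult_prime:
  fixes p e :: nat
  assumes p: "prime p" and np: "\<not> p dvd e" and e: "e > 0"
  shows "moebius_mu (p * e) = - moebius_mu e"
proof -
  have cop: "coprime p e" using p np by (simp add: prime_imp_coprime)
  have sq: "squarefree (p * e) \<longleftrightarrow> squarefree e"
    using squarefree_mult_coprime[OF cop squarefree_prime[OF p]] squarefree_multD(2)[of p e] by blast
  have pf: "prime_factors (p * e) = insert p (prime_factors e)"
    using prime_factors_product[of p e] p e by (auto simp: prime_prime_factors)
  have pn: "p \<notin> prime_factors e" using np by auto
  have "card (prime_factors (p*e)) = Suc (card (prime_factors e))"
    using pf pn by simp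
  then show ?thesis using sq p e unfolding moebius_mu_def by auto
qed

lemma mu_divisor_sum:
  fixes k :: nat
  assumes "k > 0"
  shows "(\<Sum>d | d dvd k. moebius_mu d) = (if k = 1 then 1 else 0)"
proof (cases "k = 1")
  case True
  then show ?thesis by (simp add: moebius_mu_def)
next
  case False
  then obtain p where p: "prime p" "p dvd k" using prime_factor_nat by blast
  define S where "S = {d. d dvd k}"
  have fin: "finite S" unfolding S_def using assms by simp
  define A where "A = {d\<in>S. \<not> p dvd d}"
  define B where "B = {d\<in>S. p dvd d \<and> \<not> p^2 dvd d}"
  define C where "C = {d\<in>S. p^2 dvd d}"
  have SU: "S = A \<union> (B \<union> C)" unfolding A_def B_def C_def by auto
  have fA: "finite A" "finite B" "finite C" using fin unfolding A_def B_def C_def by auto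
  have sumS: "sum moebius_mu S = sum moebius_mu A + sum moebius_mu B + sum moebius_mu C"
  proof -
    have "sum moebius_mu (B \<union> C) = sum moebius_mu B + sum moebius_mu C"
      using fA by (intro sum.union_disjoint) (auto simp: B_def C_def power2_eq_square)
    moreover have "sum moebius_mu (A \<union> (B \<union> C)) = sum moebius_mu A + sum moebius_mu (B \<union> C)"
      using fA by (intro sum.union_disjoint) (auto simp: A_def B_def C_def power2_eq_square)
    ultimately show ?thesis unfolding SU by simp
  qed
  have C0: "sum moebius_mu C = 0"
  proof (rule sum.neutral, intro ballI)
    fix d assume "d \<in> C"
    then have "p^2 dvd d" unfolding C_def by auto
    moreover have "\<not> p dvd 1" using p using prime_gt_1_nat[OF p(1)] by simp
    ultimately have "\<not> squarefree d" using not_squarefreeI by blast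
    then show "moebius_mu d = 0" unfolding moebius_mu_def by simp
  qed
  have BA: "B = (\<lambda>e. p * e) ` A"
  proof (intro set_eqI iffI)
    fix d assume d: "d \<in> B"
    then obtain e where de: "d = p * e" unfolding B_def by auto
    have "\<not> p dvd e" using d de unfolding B_def by (auto simp: power2_eq_square)
    moreover have "e dvd k" using d de unfolding B_def S_def by auto
    ultimately show "d \<in> (\<lambda>e. p * e) ` A" using de unfolding A_def S_def by auto
  next
    fix d assume "d \<in> (\<lambda>e. p * e) ` A"
    then obtain e where de: "d = p * e" and e: "e dvd k" "\<not> p dvd e" unfolding A_def S_def by auto
    have cop: "coprime p e" using p e by (simp add: prime_imp_coprime)
    have "p * e dvd k" using divides_mult[OF p(2) e(1) cop] .
    moreover have "\<not> p^2 dvd p * e" using e p by (auto simp: power2_eq_square)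
    ultimately show "d \<in> B" unfolding B_def S_def de by auto
  qed
  have inj: "inj_on (\<lambda>e. p * e) A" using p by (auto simp: inj_on_def prime_gt_0_nat)
  have "sum moebius_mu B = sum (\<lambda>e. moebius_mu (p * e)) A"
    unfolding BA using sum.reindex[OF inj] by simp
  also have "\<dots> = sum (\<lambda>e. - moebius_mu e) A"
  proof (rule sum.cong[OF refl])
    fix e assume "e \<in> A"
    then have "\<not> p dvd e" "e > 0" unfolding A_def S_def using assms by (auto intro: Nat.gr0I)
    then show "moebius_mu (p * e) = - moebius_mu e" using mu_mult_prime p by blast
  qed
  also have "\<dots> = - sum moebius_mu A" by (simp add: sum_negf)
  finally have "sum moebius_mu S = 0" using sumS C0 by simp
  then show ?thesis using False unfolding S_def by simp
qed

lemma div_diff_ind: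
  fixes n d :: nat
  assumes "n \<ge> 1"
  shows "n div d - (n - 1) div d = (if d dvd n then 1 else 0)"
proof -
  obtain k where k: "n = Suc k" using assms by (cases n) auto
  show ?thesis unfolding k using div_Suc[of k d] by (auto simp: dvd_eq_mod_eq_0)
qed

lemma restrict_sum:
  fixes k n :: nat
  assumes "1 \<le> k" "k \<le> n"
  shows "(\<Sum>d=1..n. if d dvd k then moebius_mu d else 0) = (if k = 1 then 1 else 0)"
proof -
  have "(\<Sum>d=1..n. if d dvd k then moebius_mu d else 0) = (\<Sum>d\<in>{d\<in>{1..n}. d dvd k}. moebius_mu d)"
    by (subst sum.inter_filter) auto
  also have "{d\<in>{1..n}. d dvd k} = {d. d dvd k}"
    using assms by (auto dest: dvd_imp_le intro: Nat.gr0I)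
  finally show ?thesis using mu_divisor_sum assms by simp
qed

theorem theorem4p1:
  fixes m n :: nat
  assumes "1 < m" and "m \<le> n"
  shows "(\<Sum>d=1..n. moebius_mu d * 2 ^ (n div d - (n - 1) div d + (m div d - (m - 1) div d)))
         = (if gcd m n > 1 then mertens n else 1 + mertens n)"
proof -
  let ?g = "gcd m n"
  have g1: "1 \<le> ?g" using assms by (simp add: Suc_leI)
  have g2: "?g \<le> n" using assms by (simp add: gcd_le2_nat)
  have eq: "moebius_mu d * 2 ^ (n div d - (n - 1) div d + (m div d - (m - 1) div d)) =
     moebius_mu d + (if d dvd n then moebius_mu d else 0) + (if d dvd m then moebius_mu d else 0)
       + (if d dvd ?g then moebius_mu d else 0)" for d
    using div_diff_ind[of n d] div_diff_ind[of m d] assms by auto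
  have "(\<Sum>d=1..n. moebius_mu d * 2 ^ (n div d - (n - 1) div d + (m div d - (m - 1) div d)))
     = mertens n + (\<Sum>d=1..n. if d dvd n then moebius_mu d else 0)
        + (\<Sum>d=1..n. if d dvd m then moebius_mu d else 0)
        + (\<Sum>d=1..n. if d dvd ?g then moebius_mu d else 0)"
    unfolding eq mertens_def by (simp add: sum.distrib)
  also have "\<dots> = mertens n + (if ?g = 1 then 1 else 0)"
    using restrict_sum[of n n] restrict_sum[of m n] restrict_sum[OF g1 g2] assms by simp
  finally show ?thesis using g1 by auto
qed

end
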